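(* Assume (A1). Let $E=\mu\sigma(1-2b^2\beta)$. If $$\begin{aligned} &2b^2\beta-1<0,\\ &(2-E)(1+c+2\gamma)-\omega^2dhE>0,\\ &1-c+cE+\omega^2dhE+\gamma c-E\gamma-E\gamma c+E^2\gamma-E^2\gamma^2+E\gamma^2-\gamma>0,\\ &2\gamma+c-cE-\gamma E-\omega^2dhE<3, \end{aligned}$$ then the steady state $S^*$ of $G$ is locally asymptotically stable.
   Context: Let $g_I,g_P:\mathbb{R}\to\mathbb{R}$ be continuously differentiable functions, each satisfying: $g(0)=0$ and $g$ strictly increasing; $g$ convex on $(-\infty,0]$ and concave on $[0,+\infty)$, with maximal slope attained at $0$ and $g'(0)=1$; $g$ bounded above and below. Parameters: $A>0$, $c\in(0,1)$, $\gamma>0$, $\omega\in[0,1]$, $h>0$, $d>0$, $\sigma>0$, $\mu>0$, $F^*>0$, $b>0$, $\beta>0$. Let $G=(G_1,G_2,G_3):\mathbb{R}^3\to\mathbb{R}^3$ be defined by $G_1(Y,P,Z)=A+cY+\gamma g_I(Y-Z)+\omega hP$, $G_2(Y,P,Z)=P+\sigma g_P\big(\mu\big((1-\omega)F^*+\omega dY-P+b(2\alpha(Y,P)-1)\big)\big)$, $G_3(Y,P,Z)=Y$, where $\alpha(Y,P)=\dfrac{1}{1+e^{-4b\beta(P-(1-\omega)F^*-\omega dY)}}$, and consider the system $(Y_{t+1},P_{t+1},Z_{t+1})=G(Y_t,P_t,Z_t)$. Assumption (A1): $1-c-hd>0$. $S^*=(Y^*,P^*,Y^* )$ is the fixed point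 with $Y^*=\frac{A+\omega(1-\omega)hF^*}{1-c-\omega^2dh}$, $P^*=\frac{(1-\omega)(1-c)F^*+\omega dA}{1-c-\omega^2dh}$. *)

theory Defs
  imports "HOL-Analysis.Analysis"
begin

definition admissible_g :: "(real \<Rightarrow> real) \<Rightarrow> bool" where
  "admissible_g g \<longleftrightarrow>
     (\<exists>g'. (\<forall>x. (g has_real_derivative g' x) (at x)) \<and> continuous_on UNIV g'
        \<and> g' 0 = 1 \<and> (\<forall>x. g' x \<le> g' 0))
   \<and> g 0 = 0 \<and> strict_mono g
   \<and> convex_on {..0} g \<and> concave_on {0..} g
   \<and> bdd_above (range g) \<and> bdd_below (range g)"

definition alpha_fun :: "real \<Rightarrow> real \<Rightarrow> real \<Rightarrow> real \<Rightarrow> real \<Rightarrow> real \<Rightarrow> real \<Rightarrow> real" where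
  "alpha_fun b \<beta> \<omega> F d Y P = 1 / (1 + exp (- 4 * b * \<beta> * (P - (1 - \<omega>) * F - \<omega> * d * Y)))"

definition G_map :: "(real \<Rightarrow> real) \<Rightarrow> (real \<Rightarrow> real) \<Rightarrow> real \<Rightarrow> real \<Rightarrow> real \<Rightarrow> real \<Rightarrow> real
    \<Rightarrow> real \<Rightarrow> real \<Rightarrow> real \<Rightarrow> real \<Rightarrow> real \<Rightarrow> real
    \<Rightarrow> real \<times> real \<times> real \<Rightarrow> real \<times> real \<times> real" where
  "G_map gI gP A c \<gamma> \<omega> h d \<sigma> \<mu> F b \<beta> = (\<lambda>(Y, P, Z).
     (A + c * Y + \<gamma> * gI (Y - Z) + \<omega> * h * P,
      P + \<sigma> * gP (\<mu> * ((1 - \<omega>) * F + \<omega> * d * Y - P + b * (2 * alpha_fun b \<beta> \<omega> F d Y P - 1))),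
      Y))"

definition loc_asymp_stable :: "('a::metric_space \<Rightarrow> 'a) \<Rightarrow> 'a \<Rightarrow> bool" where
  "loc_asymp_stable f x \<longleftrightarrow>
     f x = x
   \<and> (\<forall>\<epsilon>>0. \<exists>\<delta>>0. \<forall>x0. dist x0 x < \<delta> \<longrightarrow> (\<forall>n. dist ((f ^^ n) x0) x < \<epsilon>))
   \<and> (\<exists>\<delta>>0. \<forall>x0. dist x0 x < \<delta> \<longrightarrow> (\<lambda>n. (f ^^ n) x0) \<longlonglongrightarrow> x)"

end

theory Submission
  imports Defs
begin


lemma affine_rec_zero:
  fixes X E :: "nat \<Rightarrow> complex" and c :: complex
  assumes rec: "\<And>n. X (Suc n) = c * X n + E n" and c: "norm c < 1" and E: "E \<longlonglongrightarrow> 0"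
  shows "X \<longlonglongrightarrow> 0"
proof (rule LIMSEQ_I)
  fix e :: real assume e: "e > 0"
  define q where "q = norm c"
  have q0: "0 \<le> q" and q1: "q < 1" using c by (auto simp: q_def)
  have "e * (1 - q) / 2 > 0" using e q1 by simp
  from LIMSEQ_D[OF E this] obtain N where N0: "\<And>n. n \<ge> N \<Longrightarrow> norm (E n - 0) < e * (1 - q) / 2"
    by blast
  have N: "norm (E n) < e * (1 - q) / 2" if "n \<ge> N" for n using N0[OF that] by simp
  have ind: "norm (X (N + k)) \<le> q ^ k * norm (X N) + e / 2" for k
  proof (induction k)
    case 0 then show ?case using e by simp
  next
    case (Suc k)
    have "norm (X (N + Suc k)) = norm (c * X (N + k) + E (N + k))" using rec by simp
    also have "\<dots> \<le> q * norm (X (N + k)) + norm (E (N + k))"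
      by (metis norm_mult norm_triangle_ineq q_def)
    also have "\<dots> \<le> q * (q ^ k * norm (X N) + e / 2) + e * (1 - q) / 2"
      using Suc q0 N[of "N+k"] by (intro add_mono mult_left_mono) auto
    also have "\<dots> = q ^ Suc k * norm (X N) + e / 2" by (simp add: field_simps)
    finally show ?case .
  qed
  have "(\<lambda>k. q ^ k * norm (X N)) \<longlonglongrightarrow> 0"
    using q0 q1 by (intro tendsto_mult_left_zero LIMSEQ_power_zero) auto
  from LIMSEQ_D[OF this, of "e/2"] e obtain K where K0: "\<And>k. k \<ge> K \<Longrightarrow> norm (q ^ k * norm (X N) - 0) < e / 2"
    by auto
  have K: "norm (q ^ k * norm (X N)) < e / 2" if "k \<ge> K" for k using K0[OF that] by simp
  show "\<exists>no. \<forall>n\<ge>no. norm (X n - 0) < e"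
  proof (intro exI allI impI)
    fix n assume n: "n \<ge> N + K"
    define k where "k = n - N"
    have k: "n = N + k" "k \<ge> K" using n by (auto simp: k_def)
    have "q ^ k * norm (X N) < e / 2" using K[OF k(2)] q0 by simp
    then show "norm (X n - 0) < e" using ind[of k] k by simp
  qed
qed

lemma quad_root_small:
  fixes z :: complex and s t :: real
  assumes t: "\<bar>t\<bar> < 1" and s: "\<bar>s\<bar> < 1 + t" and z: "z^2 + s * z + t = 0"
  shows "norm z < 1"
proof -
  obtain x y where xy: "z = Complex x y" by (cases z)
  from z have re: "x^2 - y^2 + s * x + t = 0" and im: "2*x*y + s*y = 0"
    by (auto simp: xy complex_eq_iff power2_eq_square)
  show ?thesis
  proof (cases "y = 0")
    case True
    have "x < 1"
    proof (rule ccontr)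
      assume "\<not> x < 1" then have "x \<ge> 1" by simp
      have "x^2 + s*x + t = (x - 1) * (x + 1 + s) + (1 + s + t)" by (simp add: algebra_simps power2_eq_square)
      moreover have "(x - 1) * (x + 1 + s) \<ge> 0" using \<open>x \<ge> 1\<close> s t by (intro mult_nonneg_nonneg) auto
      ultimately have "x^2 + s*x + t > 0" using s t by linarith
      then show False using re True by simp
    qed
    moreover have "x > -1"
    proof (rule ccontr)
      assume "\<not> x > -1" then have "x \<le> -1" by simp
      have "x^2 + s*x + t = (x + 1) * (x - 1 + s) + (1 - s + t)" by (simp add: algebra_simps power2_eq_square)
      moreover have "(x + 1) * (x - 1 + s) \<ge> 0" using \<open>x \<le> -1\<close> s t by (intro mult_nonpos_nonpos) auto
      ultimately have "x^2 + s*x + t > 0" using s t by linarith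
      then show False using re True by simp
    qed
    ultimately show ?thesis using True xy by (simp add: norm_complex_def)
  next
    case False
    have "y * (2 * x + s) = 0" using im by (simp add: algebra_simps)
    then have "2 * x + s = 0" using False by simp
    note h2 = this
    have "y^2 = x^2 + s * x + t" using re by simp
    then have "x^2 + y^2 = t + x * (2 * x + s)" by (simp add: algebra_simps power2_eq_square)
    then have "x^2 + y^2 = t" using h2 by simp
    then have "sqrt (x^2 + y^2) < 1" using t by simp
    then show ?thesis using xy by (simp add: norm_complex_def)
  qed
qed



lemma cubic_rec_zero:
  fixes u :: "nat \<Rightarrow> real" and a1 a2 a3 :: real
  assumes rec: "\<And>n. u (n+3) + a1 * u (n+2) + a2 * u (n+1) + a3 * u n = 0"
    and p1: "1 + a1 + a2 + a3 > 0" and pm1: "1 - a1 + a2 - a3 > 0"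
    and f3: "1 - a2 + a1 * a3 - a3^2 > 0" and f4: "a2 < 3"
  shows "u \<longlonglongrightarrow> 0"
proof -
  define p where "p = (\<lambda>x::real. x^3 + a1 * x^2 + a2 * x + a3)"
  have "continuous_on {-1..1} p" unfolding p_def by (intro continuous_intros)
  moreover have "p (-1) \<le> 0" "0 \<le> p 1" using p1 pm1 by (simp_all add: p_def)
  ultimately obtain r where r: "-1 \<le> r" "r \<le> 1" "p r = 0"
    using IVT'[of p "-1" 0 1] by auto
  have "r \<noteq> 1" "r \<noteq> -1" using r p1 pm1 by (auto simp: p_def)
  with r have r1: "r < 1" "r > -1" by auto
  define s where "s = a1 + r"
  define t where "t = a2 + r * s"
  have a1: "a1 = s - r" and a2: "a2 = t - r * s" by (simp_all add: s_def t_def)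
  have a3: "a3 = - r * t"
  proof -
    have "a3 = -(r^3 + a1 * r^2 + a2 * r)" using r(3) unfolding p_def by linarith
    also have "\<dots> = - r * (a2 + r * (a1 + r))" by (simp add: power2_eq_square power3_eq_cube algebra_simps)
    finally show ?thesis by (simp add: t_def s_def)
  qed
  have pp1: "(1 - r) * (1 + s + t) > 0"
  proof -
    have "(1 - r) * (1 + s + t) = 1 + (s - r) + (t - r* s) + (-r * t)" by (simp add: algebra_simps)
    then show ?thesis using p1 unfolding a1 a2 a3 by simp
  qed
  have pp2: "(1 + r) * (1 - s + t) > 0"
  proof -
    have "(1 + r) * (1 - s + t) = 1 - (s - r) + (t - r* s) - (-r * t)" by (simp add: algebra_simps)
    then show ?thesis using pm1 unfolding a1 a2 a3 by simp
  qed
  have q1: "1 + s + t > 0" using pp1 r1 by (simp add: zero_less_mult_iff)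
  have q2: "1 - s + t > 0" using pp2 r1 by (simp add: zero_less_mult_iff)
  have ff3: "(1 - t) * (1 + r * s + r^2 * t) > 0"
  proof -
    have "1 - (t - r* s) + (s - r) * (-r * t) - (-r * t)^2 = (1 - t) * (1 + r * s + r^2 * t)"
      by (simp add: algebra_simps power2_eq_square)
    then show ?thesis using f3 unfolding a1 a2 a3 by simp
  qed
  have ff4: "t - r * s < 3" using f4 a2 by simp
  have tl1: "t < 1"
  proof (rule ccontr)
    assume "\<not> t < 1"
    then have "t \<ge> 1" by simp
    then have "t > 1" using ff3 by (cases "t = 1") auto
    then have neg: "1 + r * s + r^2 * t < 0" using ff3 by (simp add: zero_less_mult_iff)
    have "\<bar>s\<bar> < 1 + t" using q1 q2 by linarith
    have "r * s \<ge> - (\<bar>r\<bar> * (1 + t))"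
    proof -
      have "\<bar>r * s\<bar> \<le> \<bar>r\<bar> * (1 + t)" using \<open>\<bar>s\<bar> < 1 + t\<close> by (simp add: abs_mult mult_left_mono)
      then show ?thesis by linarith
    qed
    then have "(1 - \<bar>r\<bar>) * (1 - \<bar>r\<bar> * t) < 0" using neg
      by (simp add: algebra_simps power2_eq_square)
    then have "\<bar>r\<bar> * t > 1" using r1 by (auto simp: mult_less_0_iff)
    have "r * s < -1 - r^2 * t" using neg by simp
    then have "t * (1 + r^2) < 2" using ff4 by (simp add: algebra_simps)
    moreover have "t * (1 + r^2) \<ge> t * (2 * \<bar>r\<bar>)"
    proof -
      have "(\<bar>r\<bar> - 1)^2 \<ge> 0" by simp
      then have "1 + r^2 \<ge> 2 * \<bar>r\<bar>" by (simp add: power2_eq_square algebra_simps)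
      then show ?thesis using \<open>t > 1\<close> by (intro mult_left_mono) auto
    qed
    ultimately show False using \<open>\<bar>r\<bar> * t > 1\<close> by (simp add: algebra_simps)
  qed
  have tq: "\<bar>t\<bar> < 1" using tl1 q1 q2 by linarith
  have sq: "\<bar>s\<bar> < 1 + t" using q1 q2 by linarith
  define z1 :: complex where "z1 = (- of_real s + csqrt (of_real (s^2 - 4*t))) / 2"
  define z2 :: complex where "z2 = - of_real s - z1"
  have prod: "z1 * z2 = of_real t"
  proof -
    have "z1 * z2 = (of_real s ^ 2 - csqrt (of_real (s^2 - 4*t)) ^ 2) / 4"
      by (simp add: z1_def z2_def field_simps power2_eq_square)
    also have "\<dots> = of_real t" by (simp only: power2_csqrt) (simp add: power2_eq_square)
    finally show ?thesis .
  qed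
  have sum: "z1 + z2 = - of_real s" by (simp add: z2_def)
  have z1r: "z1^2 + s * z1 + t = 0"
  proof -
    have "z1^2 + s * z1 + t = z1^2 + s * z1 + z1 * z2" using prod by simp
    also have "\<dots> = 0" by (simp add: z2_def algebra_simps power2_eq_square)
    finally show ?thesis .
  qed
  have z2r: "z2^2 + s * z2 + t = 0"
  proof -
    have "z2^2 + s * z2 + t = z2^2 + s * z2 + z1 * z2" using prod by simp
    also have "\<dots> = z2 * (z2 + s + z1)" by (simp add: algebra_simps power2_eq_square)
    also have "\<dots> = 0" by (simp add: z2_def)
    finally show ?thesis .
  qed
  have nz1: "norm z1 < 1" by (rule quad_root_small[OF tq sq z1r])
  have nz2: "norm z2 < 1" by (rule quad_root_small[OF tq sq z2r])
  define U where "U n = complex_of_real (u n)" for n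
  define V where "V n = U (Suc n) - of_real r * U n" for n
  define W where "W n = V (Suc n) - z1 * V n" for n
  have Urec: "U (n+3) + a1 * U (n+2) + a2 * U (n+1) + a3 * U n = 0" for n
    using rec[of n] unfolding U_def by (metis (mono_tags) of_real_0 of_real_add of_real_mult)
  have Wrec: "W (Suc n) = z2 * W n + 0" for n
  proof -
    have "W (Suc n) - z2 * W n = U (n+3) - (r + z1 + z2) * U (n+2) + (r * z1 + r * z2 + z1 * z2) * U (n+1) - r * (z1 * z2) * U n"
      by (simp add: W_def V_def algebra_simps numeral_3_eq_3)
    also have "\<dots> = U (n+3) + a1 * U (n+2) + a2 * U (n+1) + a3 * U n"
    proof -
      have e1: "of_real r + z1 + z2 = - (of_real a1 :: complex)" by (simp add: add.assoc sum a1)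
      have "of_real r * z1 + of_real r * z2 + z1 * z2 = of_real r * (z1 + z2) + z1 * z2" by (simp add: distrib_left)
      also have "\<dots> = of_real (t - r * s)" by (simp add: sum prod)
      finally have e2: "of_real r * z1 + of_real r * z2 + z1 * z2 = (of_real a2 :: complex)" by (simp add: a2)
      have e3: "of_real r * (z1 * z2) = - (of_real a3 :: complex)" by (simp add: prod a3)
      show ?thesis by (simp only: e1 e2 e3) simp
    qed
    also have "\<dots> = 0" by (rule Urec)
    finally show ?thesis by simp
  qed
  have "W \<longlonglongrightarrow> 0" by (rule affine_rec_zero[of W z2 "\<lambda>_. 0"]) (use Wrec nz2 in auto)
  then have "V \<longlonglongrightarrow> 0" by (intro affine_rec_zero[of V z1 W]) (auto simp: W_def nz1)
  then have "U \<longlonglongrightarrow> 0" by (intro affine_rec_zero[of U "of_real r" V]) (auto simp: V_def r1 abs_less_iff)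
  then have "(\<lambda>n. norm (U n)) \<longlonglongrightarrow> 0" using tendsto_norm_zero by blast
  then show ?thesis by (simp add: U_def tendsto_rabs_zero_iff)
qed



lemma iter_deriv:
  fixes f :: "'a::real_normed_vector \<Rightarrow> 'a"
  assumes fx: "f x = x" and D: "(f has_derivative L) (at x)"
  shows "((f ^^ n) has_derivative (L ^^ n)) (at x) \<and> (f ^^ n) x = x"
proof (induction n)
  case 0 then show ?case by (simp add: id_def has_derivative_ident)
next
  case (Suc n)
  then have d: "((f ^^ n) has_derivative (L ^^ n)) (at x)" and e: "(f ^^ n) x = x" by auto
  have "((\<lambda>z. f ((f ^^ n) z)) has_derivative (\<lambda>v. L ((L ^^ n) v))) (at x)"
    by (rule has_derivative_compose[OF d]) (simp add: e D)
  then show ?case using e fx by (simp add: o_def)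
qed

lemma dist_scaleR_norm: "dist ((v::'a::real_normed_vector) /\<^sub>R norm w) 0 = norm v / norm w"
  by (simp add: divide_inverse_commute)

lemma stable_from_deriv:
  fixes f :: "'a::real_normed_vector \<Rightarrow> 'a"
  assumes fx: "f x = x" and D: "(f has_derivative L) (at x)"
    and N0: "N > 0" and LN: "\<And>h. norm ((L ^^ N) h) \<le> norm h / 2"
  shows "loc_asymp_stable f x"
proof -
  have DN: "((f ^^ k) has_derivative (L ^^ k)) (at x)" and FN: "(f ^^ k) x = x" for k
    using iter_deriv[OF fx D] by auto
  have cont: "isCont (f ^^ k) x" for k using DN[of k] has_derivative_continuous by blast
  obtain \<delta>1 where d1: "\<delta>1 > 0" and con1: "\<And>y. norm (y - x) < \<delta>1 \<Longrightarrow> norm ((f ^^ N) y - x) \<le> 3/4 * norm (y - x)"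
  proof -
    have "((\<lambda>y. ((f ^^ N) y - (f ^^ N) x - (L ^^ N) (y - x)) /\<^sub>R norm (y - x)) \<longlongrightarrow> 0) (at x)"
      using DN[of N] has_derivative_at_within[of "f ^^ N" "L ^^ N" x UNIV] by simp
    from tendstoD[OF this, of "1/4"]
    have "\<exists>d>0. \<forall>y. y \<noteq> x \<and> dist y x < d \<longrightarrow>
        dist (((f ^^ N) y - (f ^^ N) x - (L ^^ N) (y - x)) /\<^sub>R norm (y - x)) 0 < 1/4"
      by (simp add: eventually_at)
    then obtain d where d: "d > 0" and dd0: "\<forall>y. y \<noteq> x \<and> dist y x < d \<longrightarrow>
        dist (((f ^^ N) y - (f ^^ N) x - (L ^^ N) (y - x)) /\<^sub>R norm (y - x)) 0 < 1/4"
      by (elim exE conjE) (rule that)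
    have dd: "norm ((f ^^ N) y - (f ^^ N) x - (L ^^ N) (y - x)) / norm (y - x) < 1/4"
      if "y \<noteq> x" "dist y x < d" for y
    proof -
      have "dist (((f ^^ N) y - (f ^^ N) x - (L ^^ N) (y - x)) /\<^sub>R norm (y - x)) 0 < 1/4"
        using that by (intro mp[OF spec[OF dd0, of y]] conjI)
      then show ?thesis by (simp only: dist_scaleR_norm)
    qed
    show ?thesis
    proof (rule that[OF d])
      fix y assume y: "norm (y - x) < d"
      show "norm ((f ^^ N) y - x) \<le> 3/4 * norm (y - x)"
      proof (cases "y = x")
        case True then show ?thesis using FN by simp
      next
        case False
        then have ny: "norm (y - x) > 0" by simp
        have "norm ((f ^^ N) y - x - (L ^^ N) (y - x)) < 1/4 * norm (y - x)"
          using dd[OF False] y ny FN[of N] by (simp add: dist_norm divide_less_eq)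
        moreover have "norm ((f ^^ N) y - x) \<le> norm ((L ^^ N) (y - x)) + norm ((f ^^ N) y - x - (L ^^ N) (y - x))"
          by (rule norm_triangle_sub)
        ultimately show ?thesis using LN[of "y - x"] by linarith
      qed
    qed
  qed
  have uc: "\<exists>\<eta>>0. \<forall>y. norm (y - x) < \<eta> \<longrightarrow> (\<forall>k<N. norm ((f ^^ k) y - x) < e)" if e: "e > 0" for e
  proof -
    have "\<forall>k\<in>{..<N}. eventually (\<lambda>y. dist ((f ^^ k) y) x < e) (at x)"
    proof
      fix k
      have "((f ^^ k) \<longlongrightarrow> x) (at x)" using cont[of k] FN[of k] by (simp add: isCont_def)
      then show "eventually (\<lambda>y. dist ((f ^^ k) y) x < e) (at x)" using e by (simp add: tendsto_iff)
    qed
    then have "eventually (\<lambda>y. \<forall>k\<in>{..<N}. dist ((f ^^ k) y) x < e) (at x)"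
      by (intro eventually_ball_finite) auto
    then have "\<exists>\<eta>>0. \<forall>y. y \<noteq> x \<and> dist y x < \<eta> \<longrightarrow> (\<forall>k\<in>{..<N}. dist ((f ^^ k) y) x < e)"
      by (simp add: eventually_at)
    then obtain \<eta> where eta: "\<eta> > 0" and H: "\<forall>y. y \<noteq> x \<and> dist y x < \<eta> \<longrightarrow> (\<forall>k\<in>{..<N}. dist ((f ^^ k) y) x < e)"
      by (elim exE conjE) (rule that)
    have "\<forall>y. norm (y - x) < \<eta> \<longrightarrow> (\<forall>k<N. norm ((f ^^ k) y - x) < e)"
    proof (intro allI impI)
      fix y k assume y: "norm (y - x) < \<eta>" and k: "k < N"
      show "norm ((f ^^ k) y - x) < e"
      proof (cases "y = x")
        case True then show ?thesis using FN[of k] e by simp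
      next
        case False
        have "y \<noteq> x \<and> dist y x < \<eta>" using False y by (simp add: dist_norm)
        then have "\<forall>k\<in>{..<N}. dist ((f ^^ k) y) x < e" by (rule mp[OF spec[OF H, of y]])
        then have "dist ((f ^^ k) y) x < e" using k by simp
        then show ?thesis by (simp add: dist_norm)
      qed
    qed
    then show ?thesis using eta by blast
  qed
  have stab: "\<exists>\<delta>>0. \<forall>y. norm (y - x) < \<delta> \<longrightarrow> (\<forall>n. norm ((f ^^ n) y - x) < e)" if e: "e > 0" for e
  proof -
    obtain \<eta> where eta: "\<eta> > 0" and he: "\<And>y k. norm (y - x) < \<eta> \<Longrightarrow> k < N \<Longrightarrow> norm ((f ^^ k) y - x) < e"
      using uc[OF e] by blast
    define \<delta> where "\<delta> = min \<eta> \<delta>1"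
    have dp: "\<delta> > 0" using eta d1 by (simp add: \<delta>_def)
    have geo: "norm ((f ^^ (m * N)) y - x) \<le> (3/4) ^ m * norm (y - x)" if y: "norm (y - x) < \<delta>" for y m
    proof (induction m)
      case 0 then show ?case by simp
    next
      case (Suc m)
      have "(3/4::real) ^ m \<le> 1" by (simp add: power_le_one)
      then have "(3/4) ^ m * norm (y - x) \<le> norm (y - x)" by (simp add: mult_left_le_one_le)
      then have lt: "norm ((f ^^ (m * N)) y - x) < \<delta>1" using Suc y by (simp add: \<delta>_def)
      have "(f ^^ (Suc m * N)) y = (f ^^ N) ((f ^^ (m * N)) y)"
        by (simp add: funpow_add add.commute)
      then have "norm ((f ^^ (Suc m * N)) y - x) \<le> 3/4 * norm ((f ^^ (m * N)) y - x)"
        using con1[OF lt] by simp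
      also have "\<dots> \<le> 3/4 * ((3/4) ^ m * norm (y - x))" using Suc by simp
      finally show ?case by simp
    qed
    show ?thesis
    proof (intro exI[of _ \<delta>] conjI allI impI dp)
      fix y n assume y: "norm (y - x) < \<delta>"
      define m where "m = n div N"
      define k where "k = n mod N"
      have n: "n = k + m * N" by (simp add: m_def k_def)
      have kN: "k < N" using N0 by (simp add: k_def)
      have "(3/4::real) ^ m \<le> 1" by (simp add: power_le_one)
      then have "(3/4) ^ m * norm (y - x) \<le> norm (y - x)" by (simp add: mult_left_le_one_le)
      then have "norm ((f ^^ (m * N)) y - x) < \<eta>" using geo[OF y, of m] y by (simp add: \<delta>_def)
      then have "norm ((f ^^ k) ((f ^^ (m * N)) y) - x) < e" using he kN by blast
      then show "norm ((f ^^ n) y - x) < e" by (simp add: n funpow_add)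
    qed
  qed
  have attr: "(\<lambda>n. (f ^^ n) y) \<longlonglongrightarrow> x" if y: "norm (y - x) < min \<delta>1 1" for y
  proof -
    have geo: "norm ((f ^^ (m * N)) y - x) \<le> (3/4) ^ m * norm (y - x)" for m
    proof (induction m)
      case 0 then show ?case by simp
    next
      case (Suc m)
      have "(3/4::real) ^ m \<le> 1" by (simp add: power_le_one)
      then have "(3/4) ^ m * norm (y - x) \<le> norm (y - x)" by (simp add: mult_left_le_one_le)
      then have lt: "norm ((f ^^ (m * N)) y - x) < \<delta>1" using Suc y by simp
      have "(f ^^ (Suc m * N)) y = (f ^^ N) ((f ^^ (m * N)) y)"
        by (simp add: funpow_add add.commute)
      then have "norm ((f ^^ (Suc m * N)) y - x) \<le> 3/4 * norm ((f ^^ (m * N)) y - x)"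
        using con1[OF lt] by simp
      also have "\<dots> \<le> 3/4 * ((3/4) ^ m * norm (y - x))" using Suc by simp
      finally show ?case by simp
    qed
    show ?thesis
    proof (rule LIMSEQ_I)
      fix e :: real assume e: "e > 0"
      obtain \<delta> where dp: "\<delta> > 0" and hd: "\<And>z n. norm (z - x) < \<delta> \<Longrightarrow> norm ((f ^^ n) z - x) < e"
        using stab[OF e] by blast
      have "(\<lambda>m. (3/4::real) ^ m * norm (y - x)) \<longlonglongrightarrow> 0"
        by (intro tendsto_mult_left_zero LIMSEQ_power_zero) auto
      from LIMSEQ_D[OF this dp] obtain M where M0: "\<forall>m\<ge>M. norm ((3/4::real) ^ m * norm (y - x) - 0) < \<delta>"
        by blast
      have M: "norm ((3/4::real) ^ M * norm (y - x)) < \<delta>" using M0 by auto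
      show "\<exists>no. \<forall>n\<ge>no. norm ((f ^^ n) y - x) < e"
      proof (intro exI allI impI)
        fix n assume n: "n \<ge> M * N"
        have "norm ((f ^^ (M * N)) y - x) < \<delta>" using geo[of M] M by simp
        then have "norm ((f ^^ (n - M * N)) ((f ^^ (M * N)) y) - x) < e" by (rule hd)
        moreover have "(f ^^ n) y = (f ^^ (n - M * N)) ((f ^^ (M * N)) y)"
        proof -
          have "f ^^ n = f ^^ (n - M * N) \<circ> f ^^ (M * N)" using funpow_add[of "n - M * N" "M * N" f] n by simp
          then show ?thesis by simp
        qed
        ultimately show "norm ((f ^^ n) y - x) < e" by simp
      qed
    qed
  qed
  show ?thesis unfolding loc_asymp_stable_def
  proof (intro conjI fx)
    show "\<forall>\<epsilon>>0. \<exists>\<delta>>0. \<forall>x0. dist x0 x < \<delta> \<longrightarrow> (\<forall>n. dist ((f ^^ n) x0) x < \<epsilon>)"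
      using stab by (simp add: dist_norm)
    show "\<exists>\<delta>>0. \<forall>x0. dist x0 x < \<delta> \<longrightarrow> (\<lambda>n. (f ^^ n) x0) \<longlonglongrightarrow> x"
      using attr d1 by (intro exI[of _ "min \<delta>1 1"]) (auto simp: dist_norm)
  qed
qed



definition Lmap :: "real \<Rightarrow> real \<Rightarrow> real \<Rightarrow> real \<Rightarrow> real \<Rightarrow> real \<Rightarrow> real \<times> real \<times> real \<Rightarrow> real \<times> real \<times> real" where
  "Lmap c \<gamma> \<omega> h d E = (\<lambda>v. ((c+\<gamma>)*fst v + \<omega>*h*fst(snd v) - \<gamma>* snd(snd v),
      \<omega>*d*E*fst v + (1-E)*fst(snd v), fst v))"

lemma real_chain:
  fixes k :: "'a::real_normed_vector \<Rightarrow> real"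
  assumes "(k has_derivative k') (at x)" "(g has_real_derivative D) (at (k x))"
  shows "((\<lambda>x. g (k x)) has_derivative (\<lambda>v. D * k' v)) (at x)"
  using has_derivative_compose[of k k' x UNIV g "(*) D"] assms by (simp add: has_field_derivative_def)

lemma sig_deriv: "((\<lambda>m. 1 / (1 + exp (- 4 * b * \<beta> * m))) has_real_derivative (b * \<beta>)) (at 0)"
  by (rule derivative_eq_intros refl | simp)+

lemma G_deriv:
  fixes gI gP gI' gP' :: "real \<Rightarrow> real"
  assumes gI: "\<And>x. (gI has_real_derivative gI' x) (at x)" "gI' 0 = 1"
    and gP: "\<And>x. (gP has_real_derivative gP' x) (at x)" "gP' 0 = 1"
    and m0: "P0 - (1-\<omega>)*F - \<omega>*d*Y0 = 0"
  shows "(G_map gI gP A c \<gamma> \<omega> h d \<sigma> \<mu> F b \<beta> has_derivative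
          Lmap c \<gamma> \<omega> h d (\<mu> * \<sigma> * (1 - 2 * b^2 * \<beta>))) (at (Y0, P0, Y0))"
proof -
  define xs where "xs = (Y0, P0, Y0)"
  define m where "m x = fst (snd x) - (1-\<omega>)*F - \<omega>*d*fst x" for x :: "real \<times> real \<times> real"
  have mxs: "m xs = 0" using m0 by (simp add: m_def xs_def)
  have dm: "(m has_derivative (\<lambda>v. fst (snd v) - \<omega>*d*fst v)) (at xs)"
    unfolding m_def by (rule derivative_eq_intros refl | simp)+
  have dalpha: "((\<lambda>x. alpha_fun b \<beta> \<omega> F d (fst x) (fst (snd x))) has_derivative
      (\<lambda>v. b * \<beta> * (fst (snd v) - \<omega>*d*fst v))) (at xs)"
  proof -
    have "((\<lambda>x. (\<lambda>m. 1 / (1 + exp (- 4 * b * \<beta> * m))) (m x)) has_derivative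
      (\<lambda>v. b * \<beta> * (fst (snd v) - \<omega>*d*fst v))) (at xs)"
      by (rule real_chain[OF dm]) (subst mxs, rule sig_deriv)
    then show ?thesis by (simp add: alpha_fun_def m_def)
  qed
  define u where "u x = \<mu> * ((1 - \<omega>) * F + \<omega> * d * fst x - fst (snd x) + b * (2 * alpha_fun b \<beta> \<omega> F d (fst x) (fst (snd x)) - 1))" for x :: "real \<times> real \<times> real"
  have du: "(u has_derivative (\<lambda>v. \<mu> * (\<omega> * d * fst v - fst (snd v) + b * (2 * (b * \<beta> * (fst (snd v) - \<omega>*d*fst v)))))) (at xs)"
    unfolding u_def by (rule derivative_eq_intros refl dalpha | simp)+
  have uxs: "u xs = 0"
  proof -
    have "alpha_fun b \<beta> \<omega> F d Y0 P0 = 1/2" using m0 by (simp add: alpha_fun_def algebra_simps)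
    then show ?thesis using m0 by (simp add: u_def xs_def algebra_simps)
  qed
  have d2: "((\<lambda>x. gP (u x)) has_derivative (\<lambda>v. 1 * (\<mu> * (\<omega> * d * fst v - fst (snd v) + b * (2 * (b * \<beta> * (fst (snd v) - \<omega>*d*fst v))))))) (at xs)"
  proof -
    have "(gP has_real_derivative 1) (at (u xs))" using gP uxs by metis
    from real_chain[OF du this] show ?thesis .
  qed
  have dk: "((\<lambda>x. fst x - snd (snd x)) has_derivative (\<lambda>v. fst v - snd (snd v))) (at xs)"
    by (rule derivative_eq_intros refl | simp)+
  have d1: "((\<lambda>x. gI (fst x - snd (snd x))) has_derivative (\<lambda>v. 1 * (fst v - snd (snd v)))) (at xs)"
  proof -
    have "(gI has_real_derivative 1) (at (fst xs - snd (snd xs)))" using gI by (simp add: xs_def) metis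
    from real_chain[OF dk this] show ?thesis .
  qed
  have G: "G_map gI gP A c \<gamma> \<omega> h d \<sigma> \<mu> F b \<beta> = (\<lambda>x. (A + c * fst x + \<gamma> * gI (fst x - snd (snd x)) + \<omega> * h * fst (snd x),
      fst (snd x) + \<sigma> * gP (u x), fst x))"
    by (auto simp: G_map_def u_def fun_eq_iff)
  have "((\<lambda>x. (A + c * fst x + \<gamma> * gI (fst x - snd (snd x)) + \<omega> * h * fst (snd x),
      fst (snd x) + \<sigma> * gP (u x), fst x)) has_derivative
      (\<lambda>v. (c * fst v + \<gamma> * (1 * (fst v - snd (snd v))) + \<omega> * h * fst (snd v),
        fst (snd v) + \<sigma> * (1 * (\<mu> * (\<omega> * d * fst v - fst (snd v) + b * (2 * (b * \<beta> * (fst (snd v) - \<omega>*d*fst v)))))),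
        fst v))) (at xs)"
    by (rule derivative_eq_intros refl d1 d2 | simp)+
  moreover have "(\<lambda>v. (c * fst v + \<gamma> * (1 * (fst v - snd (snd v))) + \<omega> * h * fst (snd v),
        fst (snd v) + \<sigma> * (1 * (\<mu> * (\<omega> * d * fst v - fst (snd v) + b * (2 * (b * \<beta> * (fst (snd v) - \<omega>*d*fst v)))))),
        fst v)) = Lmap c \<gamma> \<omega> h d (\<mu> * \<sigma> * (1 - 2 * b^2 * \<beta>))"
    by (auto simp: Lmap_def fun_eq_iff algebra_simps power2_eq_square)
  ultimately show ?thesis using G xs_def by simp
qed



lemma L_tendsto:
  fixes L :: "real \<times> real \<times> real \<Rightarrow> real \<times> real \<times> real" and a1 a2 a3 :: real
  assumes CH: "\<And>v. L (L (L v)) + a1 *\<^sub>R L (L v) + a2 *\<^sub>R L v + a3 *\<^sub>R v = 0"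
    and p1: "1 + a1 + a2 + a3 > 0" and pm1: "1 - a1 + a2 - a3 > 0"
    and f3: "1 - a2 + a1 * a3 - a3^2 > 0" and f4: "a2 < 3"
  shows "(\<lambda>n. (L ^^ n) e) \<longlonglongrightarrow> 0"
proof -
  define w where "w n = (L ^^ n) e" for n
  have wr: "w (n+3) + a1 *\<^sub>R w (n+2) + a2 *\<^sub>R w (n+1) + a3 *\<^sub>R w n = 0" for n
    using CH[of "w n"] by (simp add: w_def numeral_3_eq_3)
  have r1: "fst (w (n+3)) + a1 * fst (w (n+2)) + a2 * fst (w (n+1)) + a3 * fst (w n) = 0" for n
    using arg_cong[OF wr[of n], of fst] by simp
  have r2: "fst (snd (w (n+3))) + a1 * fst (snd (w (n+2))) + a2 * fst (snd (w (n+1))) + a3 * fst (snd (w n)) = 0" for n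
    using arg_cong[OF wr[of n], of "\<lambda>x. fst (snd x)"] by simp
  have r3: "snd (snd (w (n+3))) + a1 * snd (snd (w (n+2))) + a2 * snd (snd (w (n+1))) + a3 * snd (snd (w n)) = 0" for n
    using arg_cong[OF wr[of n], of "\<lambda>x. snd (snd x)"] by simp
  have t1: "(\<lambda>n. fst (w n)) \<longlonglongrightarrow> 0" by (rule cubic_rec_zero[OF r1 p1 pm1 f3 f4])
  have t2: "(\<lambda>n. fst (snd (w n))) \<longlonglongrightarrow> 0" by (rule cubic_rec_zero[OF r2 p1 pm1 f3 f4])
  have t3: "(\<lambda>n. snd (snd (w n))) \<longlonglongrightarrow> 0" by (rule cubic_rec_zero[OF r3 p1 pm1 f3 f4])
  have "(\<lambda>n. (fst (w n), fst (snd (w n)), snd (snd (w n)))) \<longlonglongrightarrow> (0, 0, 0)"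
    by (intro tendsto_Pair t1 t2 t3)
  then show ?thesis by (simp add: w_def zero_prod_def)
qed

lemma L_contract:
  fixes L :: "real \<times> real \<times> real \<Rightarrow> real \<times> real \<times> real" and a1 a2 a3 :: real
  assumes CH: "\<And>v. L (L (L v)) + a1 *\<^sub>R L (L v) + a2 *\<^sub>R L v + a3 *\<^sub>R v = 0"
    and p1: "1 + a1 + a2 + a3 > 0" and pm1: "1 - a1 + a2 - a3 > 0"
    and f3: "1 - a2 + a1 * a3 - a3^2 > 0" and f4: "a2 < 3"
    and lin: "\<And>n. linear (L ^^ n)"
  shows "\<exists>N>0. \<forall>h. norm ((L ^^ N) h) \<le> norm h / 2"
proof -
  define e1 :: "real \<times> real \<times> real" where "e1 = (1,0,0)"
  define e2 :: "real \<times> real \<times> real" where "e2 = (0,1,0)"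
  define e3 :: "real \<times> real \<times> real" where "e3 = (0,0,1)"
  have ev: "eventually (\<lambda>n. norm ((L ^^ n) e) < 1/6) sequentially" for e
    using tendstoD[OF L_tendsto[OF CH p1 pm1 f3 f4, of e], of "1/6"] by simp
  have "eventually (\<lambda>n. norm ((L ^^ n) e1) < 1/6 \<and> norm ((L ^^ n) e2) < 1/6 \<and> norm ((L ^^ n) e3) < 1/6) sequentially"
    using ev[of e1] ev[of e2] ev[of e3] by (intro eventually_conj) auto
  then obtain N0 where N0: "\<And>n. n \<ge> N0 \<Longrightarrow> norm ((L ^^ n) e1) < 1/6 \<and> norm ((L ^^ n) e2) < 1/6 \<and> norm ((L ^^ n) e3) < 1/6"
    unfolding eventually_sequentially by blast
  define N where "N = Suc N0"
  have B: "norm ((L ^^ N) e1) < 1/6" "norm ((L ^^ N) e2) < 1/6" "norm ((L ^^ N) e3) < 1/6"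
    using N0[of N] by (auto simp: N_def)
  show ?thesis
  proof (intro exI[of _ N] conjI allI)
    show "N > 0" by (simp add: N_def)
    fix h :: "real \<times> real \<times> real"
    obtain y p z where hh: "h = (y, p, z)" by (cases h) auto
    have dec: "h = y *\<^sub>R e1 + p *\<^sub>R e2 + z *\<^sub>R e3" by (simp add: hh e1_def e2_def e3_def)
    have l: "linear (L ^^ N)" by (rule lin)
    have "(L ^^ N) h = (L ^^ N) (y *\<^sub>R e1 + p *\<^sub>R e2 + z *\<^sub>R e3)" using dec by (rule arg_cong)
    also have "\<dots> = (L ^^ N) (y *\<^sub>R e1) + (L ^^ N) (p *\<^sub>R e2) + (L ^^ N) (z *\<^sub>R e3)"
      by (simp only: linear_add[OF l])
    also have "\<dots> = y *\<^sub>R (L ^^ N) e1 + p *\<^sub>R (L ^^ N) e2 + z *\<^sub>R (L ^^ N) e3"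
      by (simp only: linear_scale[OF l])
    finally have eq: "(L ^^ N) h = y *\<^sub>R (L ^^ N) e1 + p *\<^sub>R (L ^^ N) e2 + z *\<^sub>R (L ^^ N) e3" .
    have tri: "norm (a + b + c) \<le> norm a + norm b + norm c" for a b c :: "real \<times> real \<times> real"
      by (meson add_mono norm_triangle_ineq order_trans order_refl)
    have "norm ((L ^^ N) h) \<le> \<bar>y\<bar> * norm ((L ^^ N) e1) + \<bar>p\<bar> * norm ((L ^^ N) e2) + \<bar>z\<bar> * norm ((L ^^ N) e3)"
      unfolding eq using tri[of "y *\<^sub>R (L ^^ N) e1" "p *\<^sub>R (L ^^ N) e2" "z *\<^sub>R (L ^^ N) e3"]
      by (simp only: norm_scaleR)
    also have "\<dots> \<le> \<bar>y\<bar> * (1/6) + \<bar>p\<bar> * (1/6) + \<bar>z\<bar> * (1/6)"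
      using B by (intro add_mono mult_left_mono) auto
    also have "\<dots> \<le> norm h / 2"
    proof -
      have "\<bar>y\<bar> \<le> norm h" using norm_fst_le[of y "(p,z)"] by (simp add: hh)
      moreover have "\<bar>p\<bar> \<le> norm h" using norm_fst_le[of p z] norm_snd_le[of "(p,z)" y] by (simp add: hh)
      moreover have "\<bar>z\<bar> \<le> norm h" using norm_snd_le[of z p] norm_snd_le[of "(p,z)" y] by (simp add: hh)
      ultimately show ?thesis by linarith
    qed
    finally show "norm ((L ^^ N) h) \<le> norm h / 2" .
  qed
qed



theorem proposition4:
  fixes gI gP :: "real \<Rightarrow> real"
    and A c \<gamma> \<omega> h d \<sigma> \<mu> F b \<beta> :: real
  assumes "admissible_g gI" and "admissible_g gP"
    and "A > 0" and "0 < c" and "c < 1" and "\<gamma> > 0" and "0 \<le> \<omega>" and "\<omega> \<le> 1"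
    and "h > 0" and "d > 0" and "\<sigma> > 0" and "\<mu> > 0" and "F > 0" and "b > 0" and "\<beta> > 0"
    and A1: "1 - c - h * d > 0"
    and c1: "2 * b^2 * \<beta> - 1 < 0"
    and c2: "let E = \<mu> * \<sigma> * (1 - 2 * b^2 * \<beta>) in
               (2 - E) * (1 + c + 2 * \<gamma>) - \<omega>^2 * d * h * E > 0"
    and c3: "let E = \<mu> * \<sigma> * (1 - 2 * b^2 * \<beta>) in
               1 - c + c * E + \<omega>^2 * d * h * E + \<gamma> * c - E * \<gamma> - E * \<gamma> * c + E^2 * \<gamma>
               - E^2 * \<gamma>^2 + E * \<gamma>^2 - \<gamma> > 0"
    and c4: "let E = \<mu> * \<sigma> * (1 - 2 * b^2 * \<beta>) in
               2 * \<gamma> + c - c * E - \<gamma> * E - \<omega>^2 * d * h * E < 3"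
  shows "let Ystar = (A + \<omega> * (1 - \<omega>) * h * F) / (1 - c - \<omega>^2 * d * h);
             Pstar = ((1 - \<omega>) * (1 - c) * F + \<omega> * d * A) / (1 - c - \<omega>^2 * d * h)
         in loc_asymp_stable (G_map gI gP A c \<gamma> \<omega> h d \<sigma> \<mu> F b \<beta>) (Ystar, Pstar, Ystar)"
proof -
  obtain gI' where gI: "\<And>x. (gI has_real_derivative gI' x) (at x)" "gI' 0 = 1" and gI0: "gI 0 = 0"
    using assms(1) unfolding admissible_g_def by blast
  obtain gP' where gP: "\<And>x. (gP has_real_derivative gP' x) (at x)" "gP' 0 = 1" and gP0: "gP 0 = 0"
    using assms(2) unfolding admissible_g_def by blast
  define E where "E = \<mu> * \<sigma> * (1 - 2 * b^2 * \<beta>)"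
  define D where "D = 1 - c - \<omega>^2 * d * h"
  define Ys where "Ys = (A + \<omega> * (1 - \<omega>) * h * F) / D"
  define Ps where "Ps = ((1 - \<omega>) * (1 - c) * F + \<omega> * d * A) / D"
  have "\<omega>^2 \<le> 1" using assms(7,8) by (simp add: power_le_one)
  then have "\<omega>^2 * (d * h) \<le> d * h" using assms(9,10) by (simp add: mult_left_le_one_le)
  then have Dp: "D > 0" using A1 by (simp add: D_def algebra_simps)
  have Ep: "E > 0" using c1 assms(11,12) by (simp add: E_def)
  have m0: "Ps - (1 - \<omega>) * F - \<omega> * d * Ys = 0"
    using Dp by (simp add: Ps_def Ys_def D_def field_simps power2_eq_square)
  have y0: "A + c * Ys + \<omega> * h * Ps = Ys"
  proof -
    have Yd: "D * Ys = A + \<omega> * (1 - \<omega>) * h * F" using Dp by (simp add: Ys_def)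
    have Pe: "Ps = (1 - \<omega>) * F + \<omega> * d * Ys" using m0 by simp
    have "A + c * Ys + \<omega> * h * Ps = (A + \<omega> * (1 - \<omega>) * h * F) + (c + \<omega>^2 * d * h) * Ys"
      by (simp add: Pe algebra_simps power2_eq_square)
    also have "\<dots> = D * Ys + (1 - D) * Ys" by (simp only: Yd[symmetric]) (simp add: D_def algebra_simps)
    also have "\<dots> = Ys" by (simp add: algebra_simps)
    finally show ?thesis .
  qed
  define G where "G = G_map gI gP A c \<gamma> \<omega> h d \<sigma> \<mu> F b \<beta>"
  have fixpt: "G (Ys, Ps, Ys) = (Ys, Ps, Ys)"
  proof -
    have "alpha_fun b \<beta> \<omega> F d Ys Ps = 1/2" using m0 by (simp add: alpha_fun_def algebra_simps)
    then have "2 * alpha_fun b \<beta> \<omega> F d Ys Ps - 1 = 0" by simp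
    moreover have "(1 - \<omega>) * F + \<omega> * d * Ys - Ps = 0" using m0 by simp
    ultimately show ?thesis using gI0 gP0 y0 by (simp add: G_def G_map_def)
  qed
  define L where "L = Lmap c \<gamma> \<omega> h d E"
  have DL: "(G has_derivative L) (at (Ys, Ps, Ys))"
    unfolding G_def L_def E_def by (rule G_deriv[OF gI gP m0])
  define a1 where "a1 = -(c + \<gamma> + 1 - E)"
  define a2 where "a2 = (c + \<gamma>) * (1 - E) - \<omega>^2 * d * h * E + \<gamma>"
  define a3 where "a3 = - \<gamma> * (1 - E)"
  have CH: "L (L (L v)) + a1 *\<^sub>R L (L v) + a2 *\<^sub>R L v + a3 *\<^sub>R v = 0" for v
    by (cases v) (simp add: L_def Lmap_def a1_def a2_def a3_def algebra_simps power2_eq_square zero_prod_def)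
  have p1: "1 + a1 + a2 + a3 > 0"
  proof -
    have "1 + a1 + a2 + a3 = E * D" by (simp add: a1_def a2_def a3_def D_def algebra_simps)
    then show ?thesis using Ep Dp by simp
  qed
  have pm1: "1 - a1 + a2 - a3 > 0"
  proof -
    have "1 - a1 + a2 - a3 = (2 - E) * (1 + c + 2 * \<gamma>) - \<omega>^2 * d * h * E"
      by (simp add: a1_def a2_def a3_def algebra_simps)
    then show ?thesis using c2 by (simp add: E_def Let_def)
  qed
  have f3: "1 - a2 + a1 * a3 - a3^2 > 0"
  proof -
    have "1 - a2 + a1 * a3 - a3^2 = 1 - c + c * E + \<omega>^2 * d * h * E + \<gamma> * c - E * \<gamma> - E * \<gamma> * c + E^2 * \<gamma>
               - E^2 * \<gamma>^2 + E * \<gamma>^2 - \<gamma>"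
      by (simp add: a1_def a2_def a3_def algebra_simps power2_eq_square)
    then show ?thesis using c3 by (simp add: E_def Let_def)
  qed
  have f4: "a2 < 3"
  proof -
    have "a2 = 2 * \<gamma> + c - c * E - \<gamma> * E - \<omega>^2 * d * h * E"
      by (simp add: a2_def algebra_simps)
    then show ?thesis using c4 by (simp add: E_def Let_def)
  qed
  have lin: "linear (L ^^ n)" for n
    using iter_deriv[OF fixpt DL, of n] has_derivative_linear by blast
  obtain N where N: "N > 0" "\<And>h. norm ((L ^^ N) h) \<le> norm h / 2"
    using L_contract[OF CH p1 pm1 f3 f4 lin] by blast
  have "loc_asymp_stable G (Ys, Ps, Ys)"
    by (rule stable_from_deriv[OF fixpt DL N])
  then show ?thesis by (simp add: G_def Ys_def Ps_def D_def Let_def)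
qed


end
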